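(* Let $q$ be a prime power, $m\ge1$, $j\ge1$, let $G\in GF(q^m)[x]$ be separable with a factorization $G=\prod_{i=1}^{l}G_i$ into pairwise coprime factors, and let $L=\{\alpha_1,\dots,\alpha_n\}\subseteq GF(q^m)$ with $G(\alpha_k)\ne0$ for all $k$. Put $G_i^{(j)}=G_i^j$ and $G^{(j)}=G^j=\prod_{i=1}^l G_i^{(j)}$. If $r_i$ denotes the redundancy ($n$ minus the dimension) of the code $\Gamma(L,G_i^{(j)})$, then the dimension $k$ of $\Gamma(L,G^{(j)})$ satisfies $k\ge n-\sum_{i=1}^l r_i$.
   Context: For a set $L=\{\alpha_1,\dots,\alpha_n\}$ of distinct elements of $GF(q^m)$ and $P\in GF(q^m)[x]$ with $P(\alpha_k)\neq0$ for all $k$, the $q$-ary Goppa code is $\Gamma(L,P)=\{c\in GF(q)^n:\ \sum_k \frac{c_k}{x-\alpha_k}\equiv 0 \pmod{P(x)}\}$, a $GF(q)$-linear code; dimensions are over $GF(q)$. *)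

theory Defs
  imports "HOL-Library.Function_Algebras" "HOL-Computational_Algebra.Polynomial"
begin

definition separable_poly :: "'a::field poly \<Rightarrow> bool" where
  "separable_poly G \<longleftrightarrow> coprime G (pderiv G)"

text \<open>An inverse of (x - a) modulo P (exists when P(a) is nonzero).\<close>
definition lin_inv_mod :: "'a::field poly \<Rightarrow> 'a \<Rightarrow> 'a poly" where
  "lin_inv_mod P a = (SOME u. P dvd ([:-a, 1:] * u - 1))"

text \<open>Goppa code over the small field 'f (GF(q)), embedded into 'a (GF(q^m)) by phi.
  Codewords are c : nat => 'f supported on {0..<n}.
  Condition: sum_k c_k/(x - alpha_k) = 0 mod P.\<close>
definition goppa_code ::
  "('f::field \<Rightarrow> 'a::field) \<Rightarrow> (nat \<Rightarrow> 'a) \<Rightarrow> nat \<Rightarrow> 'a poly \<Rightarrow> (nat \<Rightarrow> 'f) set" where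
  "goppa_code \<phi> \<alpha> n P = {c. (\<forall>k\<ge>n. c k = 0) \<and>
      P dvd (\<Sum>k<n. smult (\<phi> (c k)) (lin_inv_mod P (\<alpha> k)))}"

definition code_dim :: "(nat \<Rightarrow> 'f::field) set \<Rightarrow> nat" where
  "code_dim C = vector_space.dim (\<lambda>(a::'f) (c::nat \<Rightarrow> 'f). (\<lambda>k. a * c k)) C"

end

theory Submission
  imports Defs
begin
definition bez :: "'a::field poly \<Rightarrow> 'a poly \<Rightarrow> bool" where
  "bez a b \<longleftrightarrow> (\<exists>x y. x * a + y * b = 1)"

lemma coprime_imp_bez:
  fixes a b :: "'a::field poly"
  assumes cp: "coprime a b" shows "bez a b"
proof -
  define I where "I = {x*a + y*b | x y. True}"
  have ab: "a \<noteq> 0 \<or> b \<noteq> 0"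
  proof (rule ccontr)
    assume "\<not> (a \<noteq> 0 \<or> b \<noteq> 0)"
    then have "a = 0" "b = 0" by auto
    with cp have "is_unit (0::'a poly)" by simp
    then show False by simp
  qed
  have ex: "\<exists>n. \<exists>d\<in>I. d \<noteq> 0 \<and> degree d = n"
  proof (cases "a \<noteq> 0")
    case True
    have "a \<in> I" unfolding I_def by (rule CollectI, rule exI[of _ 1], rule exI[of _ 0]) simp
    then show ?thesis using True by blast
  next
    case False
    then have "b \<noteq> 0" using ab by auto
    have "b \<in> I" unfolding I_def by (rule CollectI, rule exI[of _ 0], rule exI[of _ 1]) simp
    then show ?thesis using \<open>b \<noteq> 0\<close> by blast
  qed
  define n where "n = (LEAST n. \<exists>d\<in>I. d \<noteq> 0 \<and> degree d = n)"
  from LeastI_ex[OF ex] obtain d where dI: "d \<in> I" and d0: "d \<noteq> 0" and dn: "degree d = n"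
    unfolding n_def by blast
  from dI obtain x y where dxy: "d = x*a + y*b" unfolding I_def by blast
  have minimal: "\<And>e. e \<in> I \<Longrightarrow> e \<noteq> 0 \<Longrightarrow> degree d \<le> degree e"
    unfolding dn n_def by (rule Least_le) blast
  have divs: "d dvd c" if cI: "c \<in> I" for c
  proof -
    from cI obtain u v where cuv: "c = u*a + v*b" unfolding I_def by blast
    have "c mod d = c - (c div d) * d" by (simp add: mod_div_mult_eq[symmetric] algebra_simps)
    also have "\<dots> = (u - (c div d) * x) * a + (v - (c div d) * y) * b"
      by (simp add: cuv dxy algebra_simps)
    finally have "c mod d \<in> I" unfolding I_def by blast
    show ?thesis
    proof (rule ccontr)
      assume "\<not> d dvd c"
      then have "c mod d \<noteq> 0" by (simp add: mod_eq_0_iff_dvd)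
      then have "degree (c mod d) < degree d" using degree_mod_less'[OF d0] by blast
      moreover have "degree d \<le> degree (c mod d)" by (rule minimal) fact+
      ultimately show False by simp
    qed
  qed
  have "a \<in> I" unfolding I_def by (rule CollectI, rule exI[of _ 1], rule exI[of _ 0]) simp
  moreover have "b \<in> I" unfolding I_def by (rule CollectI, rule exI[of _ 0], rule exI[of _ 1]) simp
  ultimately have "is_unit d" using divs cp coprime_common_divisor by blast
  then obtain k where "1 = d * k" by (auto elim: dvdE)
  then have "(k*x) * a + (k*y) * b = 1" by (simp add: dxy algebra_simps)
  then show ?thesis unfolding bez_def by blast
qed

lemma bez_mult_left:
  fixes a b c :: "'a::field poly"
  assumes "bez a c" "bez b c" shows "bez (a*b) c"
proof -
  from assms obtain x y x' y' where 1: "x*a + y*c = 1" and 2: "x'*b + y'*c = 1" unfolding bez_def by blast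
  have "(x*a + y*c) * (x'*b + y'*c) = 1" using 1 2 by simp
  then have "(x*x') * (a*b) + (x*a*y' + y*x'*b + y*y'*c) * c = 1" by (simp add: algebra_simps)
  then show ?thesis unfolding bez_def by blast
qed

lemma bez_commute: "bez a b \<longleftrightarrow> bez b a"
  unfolding bez_def by (metis add.commute)

lemma bez_one: "bez 1 b" unfolding bez_def by (rule exI[of _ 1], rule exI[of _ 0]) simp

lemma bez_power_left: "bez a c \<Longrightarrow> bez (a ^ j) c"
  by (induction j) (auto simp: bez_one bez_mult_left)

lemma bez_power: "bez a c \<Longrightarrow> bez (a ^ j) (c ^ j)"
  by (meson bez_power_left bez_commute)

lemma bez_dvd_mult:
  fixes a b c :: "'a::field poly"
  assumes "bez a b" "a dvd c" "b dvd c" shows "a * b dvd c"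
proof -
  from assms(1) obtain x y where xy: "x*a + y*b = 1" unfolding bez_def by blast
  from assms(2) obtain s where s: "c = a*s" by (auto elim: dvdE)
  from assms(3) obtain t where t: "c = b*t" by (auto elim: dvdE)
  have "c = (x*a + y*b) * c" using xy by simp
  also have "\<dots> = x*a*(b*t) + y*b*(a*s)" using s t by (simp add: algebra_simps)
  also have "\<dots> = (a*b) * (x*t + y*s)" by (simp add: algebra_simps)
  finally show ?thesis by (metis dvd_triv_left)
qed

lemma prod_bez_dvd:
  fixes f :: "nat \<Rightarrow> 'a::field poly"
  assumes "\<And>i. i < l \<Longrightarrow> f i dvd x"
    and "\<And>i i'. i < l \<Longrightarrow> i' < l \<Longrightarrow> i \<noteq> i' \<Longrightarrow> bez (f i) (f i')"
  shows "(\<Prod>i<l. f i) dvd x"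
  using assms
proof (induction l)
  case 0 then show ?case by simp
next
  case (Suc l)
  note outer = Suc.prems(2)
  have "bez (\<Prod>i<l'. f i) (f l)" if "l' \<le> l" for l'
    using that
  proof (induction l')
    case 0 then show ?case by (simp add: bez_one)
  next
    case (Suc l')
    then show ?case using outer[of l' l] by (simp add: bez_mult_left)
  qed
  moreover have "(\<Prod>i<l. f i) dvd x" using Suc by auto
  ultimately show ?case using Suc.prems(1)[of l] by (simp add: bez_dvd_mult)
qed

lemma lin_inv_ok:
  fixes P :: "'a::field poly"
  assumes "poly P a \<noteq> 0" shows "P dvd ([:-a,1:] * lin_inv_mod P a - 1)"
proof -
  define Q where "Q = synthetic_div P a"
  define p where "p = [:-a, 1:]"
  define c where "c = poly P a"
  have PQ: "p * Q + [:c:] = P" unfolding Q_def p_def c_def by (rule synthetic_div_correct')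
  define u where "u = smult (- inverse c) Q"
  have "p * u = smult (- inverse c) (p * Q)" by (simp add: u_def mult_smult_right)
  also have "p * Q = P - [:c:]" using PQ by (simp add: algebra_simps)
  also have "smult (- inverse c) (P - [:c:]) = smult (- inverse c) P + 1"
    using assms by (simp add: c_def smult_diff_right one_pCons)
  finally have "p * u - 1 = P * [:- inverse c:]" by simp
  then have "\<exists>u. P dvd (p * u - 1)" by (metis dvd_triv_left)
  then show ?thesis unfolding lin_inv_mod_def p_def by (rule someI_ex)
qed

lemma lin_inv_cong:
  fixes P Q :: "'a::field poly"
  assumes "poly P a \<noteq> 0" "poly Q a \<noteq> 0" "Q dvd P"
  shows "Q dvd (lin_inv_mod P a - lin_inv_mod Q a)"
proof -
  define v where "v = lin_inv_mod Q a"
  define w where "w = lin_inv_mod P a"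
  define p where "p = [:-a, 1:]"
  define d where "d = w - v"
  have "Q dvd (p * w - 1)" using lin_inv_ok[OF assms(1)] assms(3) unfolding p_def w_def by (rule dvd_trans[rotated])
  moreover have hv: "Q dvd (p * v - 1)" using lin_inv_ok[OF assms(2)] unfolding v_def p_def .
  ultimately have "Q dvd (p * w - 1) - (p * v - 1)"
    by (rule dvd_diff)
  then have h: "Q dvd p * d" by (simp add: d_def algebra_simps)
  have "d = v * (p * d) - (p * v - 1) * d" by (simp add: algebra_simps)
  moreover have "Q dvd v * (p * d)" using h by (rule dvd_mult)
  moreover have "Q dvd (p * v - 1) * d" using hv by (rule dvd_mult2)
  ultimately show ?thesis unfolding d_def v_def w_def by (metis dvd_diff)
qed

context vector_space
begin

lemma dim_mono_fin:
  assumes E: "finite E" and T: "T \<subseteq> span E" and ST: "S \<subseteq> T"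
  shows "dim S \<le> dim T"
proof -
  obtain Bt where Bt: "Bt \<subseteq> T" "independent Bt" "T \<subseteq> span Bt" "card Bt = dim T"
    by (rule basis_exists)
  have "finite Bt" using independent_span_bound[OF E Bt(2)] Bt(1) T by blast
  have "dim S \<le> card Bt" by (rule dim_le_card) (use ST Bt(3) \<open>finite Bt\<close> in auto)
  then show ?thesis using Bt(4) by simp
qed

lemma dim_insert_fin:
  assumes E: "finite E" and S: "S \<subseteq> span E" and x: "x \<notin> span S"
  shows "dim (insert x S) = Suc (dim S)"
proof -
  obtain Bs where Bs: "Bs \<subseteq> S" "independent Bs" "S \<subseteq> span Bs" "card Bs = dim S"
    by (rule basis_exists)
  have fin: "finite Bs" using independent_span_bound[OF E Bs(2)] Bs(1) S by blast
  have xB: "x \<notin> span Bs" using x span_mono[OF Bs(1)] by blast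
  then have xB': "x \<notin> Bs" using span_base by blast
  show ?thesis
  proof (rule dim_unique)
    show "insert x Bs \<subseteq> insert x S" using Bs(1) by blast
    show "insert x S \<subseteq> span (insert x Bs)"
      using Bs(3) span_mono[of Bs "insert x Bs"] span_base[of x "insert x Bs"] by blast
    show "independent (insert x Bs)" by (rule independent_insertI[OF xB Bs(2)])
    show "card (insert x Bs) = Suc (dim S)" using fin xB' Bs(4) by simp
  qed
qed

lemma dim_Int_aux:
  assumes E: "finite E" and B: "subspace B" "B \<subseteq> span E"
    and X: "finite X" "X \<subseteq> span E"
  shows "dim X + dim B \<le> dim (span X \<inter> B) + dim (B \<union> X)"
  using X
proof (induction X rule: finite_induct)
  case empty
  have "dim ({}::'b set) = 0" by (rule dim_unique[of "{}"]) (auto simp: dependent_def)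
  then show ?case by simp
next
  case (insert x X)
  have spE: "span (span E) = span E" by (simp add: span_span)
  have XE: "X \<subseteq> span E" and xE: "x \<in> span E" using insert by auto
  have IH: "dim X + dim B \<le> dim (span X \<inter> B) + dim (B \<union> X)" using insert XE by blast
  have BXE: "B \<union> X \<subseteq> span E" using B XE by auto
  have sub1: "span X \<inter> B \<subseteq> span (insert x X) \<inter> B" using span_mono[of X "insert x X"] by blast
  have E1: "span (insert x X) \<inter> B \<subseteq> span E" using B(2) by blast
  have mono1: "dim (span X \<inter> B) \<le> dim (span (insert x X) \<inter> B)"
    by (rule dim_mono_fin[OF E E1 sub1])
  have mono2: "dim (B \<union> X) \<le> dim (B \<union> insert x X)"
    by (rule dim_mono_fin[OF E]) (use BXE xE in auto)
  show ?case
  proof (cases "x \<in> span X")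
    case True
    then have "dim (insert x X) = dim X" by (metis dim_span span_redundant)
    then show ?thesis using IH mono1 mono2 by linarith
  next
    case xX: False
    have d1: "dim (insert x X) = Suc (dim X)" by (rule dim_insert_fin[OF E XE xX])
    show ?thesis
    proof (cases "x \<in> span (B \<union> X)")
      case True
      have "dim (B \<union> insert x X) = dim (insert x (B \<union> X))" by simp
      also have "\<dots> = dim (B \<union> X)" using True by (metis dim_span span_redundant)
      finally have d2: "dim (B \<union> insert x X) = dim (B \<union> X)" .
      from True obtain b y where xby: "x = b + y" and b: "b \<in> span B" and y: "y \<in> span X"
        unfolding span_Un by blast
      have bB: "b \<in> B" using b B(1) by (metis span_eq_iff)
      have "b = x - y" using xby by simp
      then have bsp: "b \<in> span (insert x X)"
        using span_diff[of x "insert x X" y] span_base[of x "insert x X"] span_mono[of X "insert x X"] y by auto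
      have bnot: "b \<notin> span X"
      proof
        assume "b \<in> span X"
        then have "x \<in> span X" using xby y span_add by auto
        then show False using xX by simp
      qed
      have "span (span X \<inter> B) \<subseteq> span X" by (rule span_minimal) (auto simp: subspace_span)
      then have bnot2: "b \<notin> span (span X \<inter> B)" using bnot by blast
      have "dim (insert b (span X \<inter> B)) = Suc (dim (span X \<inter> B))"
        by (rule dim_insert_fin[OF E _ bnot2]) (use B(2) in blast)
      moreover have "dim (insert b (span X \<inter> B)) \<le> dim (span (insert x X) \<inter> B)"
        by (rule dim_mono_fin[OF E E1]) (use sub1 bsp bB in blast)
      ultimately show ?thesis using IH d1 d2 by linarith
    next
      case False
      have "dim (B \<union> insert x X) = dim (insert x (B \<union> X))" by simp
      also have "\<dots> = Suc (dim (B \<union> X))" by (rule dim_insert_fin[OF E BXE False])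
      finally show ?thesis using IH d1 mono1 by linarith
    qed
  qed
qed

lemma dim_Int_ge:
  assumes E: "finite E" and A: "subspace A" "A \<subseteq> span E" and B: "subspace B" "B \<subseteq> span E"
  shows "dim A + dim B \<le> dim (A \<inter> B) + card E"
proof -
  obtain X where X: "X \<subseteq> A" "independent X" "A \<subseteq> span X" "card X = dim A"
    by (rule basis_exists)
  have fX: "finite X" using independent_span_bound[OF E X(2)] X(1) A(2) by blast
  have spX: "span X = A" by (rule span_subspace[OF X(1) X(3) A(1)])
  have "dim X = dim A" using spX by (metis dim_span)
  moreover have "dim X + dim B \<le> dim (span X \<inter> B) + dim (B \<union> X)"
    by (rule dim_Int_aux[OF E B fX]) (use X(1) A(2) in blast)
  moreover have "dim (B \<union> X) \<le> card E"
    by (rule dim_le_card[OF _ E]) (use X(1) A(2) B(2) in blast)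
  moreover have "dim (span X \<inter> B) = dim (A \<inter> B)" using spX by simp
  ultimately show ?thesis by linarith
qed

end


interpretation fv: vector_space "\<lambda>(a::'f::field) (c::nat \<Rightarrow> 'f). (\<lambda>k. a * c k)"
  by unfold_locales (simp_all add: fun_eq_iff algebra_simps)

lemma code_dim_fv: "code_dim C = fv.dim C"
  by (simp add: code_dim_def)

definition Vsp :: "nat \<Rightarrow> (nat \<Rightarrow> 'f::field) set" where
  "Vsp n = {c. \<forall>k\<ge>n. c k = 0}"

definition Esp :: "nat \<Rightarrow> (nat \<Rightarrow> 'f::field) set" where
  "Esp n = (\<lambda>k. \<lambda>i. if i = k then 1 else 0) ` {..<n}"

lemma sum_fun_apply: "(\<Sum>k\<in>A. f k) i = (\<Sum>k\<in>A. f k i)"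
  by (induction A rule: infinite_finite_induct) auto

lemma Esp_fin: "finite (Esp n)" by (simp add: Esp_def)

lemma Esp_card: "card (Esp n :: (nat \<Rightarrow> 'f::field) set) = n"
proof -
  have "inj_on (\<lambda>k. \<lambda>i. if i = k then (1::'f) else 0) {..<n}"
    by (rule inj_onI) (metis one_neq_zero)
  then show ?thesis by (simp add: Esp_def card_image)
qed

lemma Vsp_subspace: "fv.subspace (Vsp n)"
  by (auto simp: fv.subspace_def Vsp_def)

lemma Vsp_span: "Vsp n \<subseteq> fv.span (Esp n)"
proof
  fix c :: "nat \<Rightarrow> 'a" assume c: "c \<in> Vsp n"
  have "c = (\<Sum>k<n. (\<lambda>i. c k * (if i = k then 1 else 0)))"
  proof
    fix i
    show "c i = (\<Sum>k<n. (\<lambda>i. c k * (if i = k then 1 else 0))) i"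
      using c by (auto simp: sum_fun_apply Vsp_def if_distrib cong: if_cong)
  qed
  also have "\<dots> \<in> fv.span (Esp n)"
    by (rule fv.span_sum, rule fv.span_scale, rule fv.span_base) (auto simp: Esp_def)
  finally show "c \<in> fv.span (Esp n)" .
qed

lemma Esp_sub: "Esp n \<subseteq> Vsp n" by (auto simp: Esp_def Vsp_def)

lemma span_Esp: "fv.span (Esp n) \<subseteq> Vsp n"
  by (rule fv.span_minimal[OF Esp_sub Vsp_subspace])

lemma Esp_indep: "fv.independent (Esp n :: (nat \<Rightarrow> 'f::field) set)"
proof
  assume "fv.dependent (Esp n :: (nat \<Rightarrow> 'f) set)"
  then obtain a :: "nat \<Rightarrow> 'f" where aE: "a \<in> Esp n" and asp: "a \<in> fv.span (Esp n - {a})"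
    unfolding fv.dependent_def by blast
  from aE obtain k where ak: "a = (\<lambda>i. if i = k then 1 else 0)" unfolding Esp_def by blast
  have "fv.span (Esp n - {a}) \<subseteq> {v. v k = 0}"
  proof (rule fv.span_minimal)
    show "Esp n - {a} \<subseteq> {v. v k = 0}" using ak by (auto simp: Esp_def)
    show "fv.subspace {v :: nat \<Rightarrow> 'f. v k = 0}" by (auto simp: fv.subspace_def)
  qed
  then show False using asp ak by auto
qed

lemma dim_Vsp: "fv.dim (Vsp n :: (nat \<Rightarrow> 'f::field) set) = n"
  by (rule fv.dim_unique[OF Esp_sub Vsp_span Esp_indep Esp_card])

lemma codim_induct:
  fixes Cs :: "nat \<Rightarrow> (nat \<Rightarrow> 'f::field) set"
  assumes "\<And>i. fv.subspace (Cs i)" "\<And>i. Cs i \<subseteq> Vsp n"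
  shows "int (fv.dim (Vsp n \<inter> {c. \<forall>i<l. c \<in> Cs i}))
           \<ge> int n - (\<Sum>i<l. int n - int (fv.dim (Cs i)))"
proof (induction l)
  case 0 then show ?case by (simp add: dim_Vsp)
next
  case (Suc l)
  let ?D = "Vsp n \<inter> {c. \<forall>i<l. c \<in> Cs i}"
  have eq: "Vsp n \<inter> {c. \<forall>i<Suc l. c \<in> Cs i} = ?D \<inter> Cs l" by (auto simp: less_Suc_eq)
  have subD: "fv.subspace ?D"
  proof -
    have "fv.subspace {c. \<forall>i<l. c \<in> Cs i}"
      using assms(1) by (auto simp: fv.subspace_def)
    then show ?thesis using Vsp_subspace fv.subspace_inter by blast
  qed
  have "fv.dim ?D + fv.dim (Cs l) \<le> fv.dim (?D \<inter> Cs l) + card (Esp n :: (nat \<Rightarrow> 'f) set)"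
    by (rule fv.dim_Int_ge[OF Esp_fin subD _ assms(1)]) (use Vsp_span assms(2) in blast)+
  then show ?case using Suc.IH eq by (simp add: Esp_card)
qed

lemma smult_sum2: "smult a (\<Sum>i\<in>S. f i) = (\<Sum>i\<in>S. smult a (f i))"
  by (induction S rule: infinite_finite_induct) (simp_all add: smult_add_right)

theorem lemma2:
  fixes \<phi> :: "'f::{field,finite} \<Rightarrow> 'a::{field,finite}"
    and q m j n l :: nat
    and G :: "'a poly" and Gs :: "nat \<Rightarrow> 'a poly" and \<alpha> :: "nat \<Rightarrow> 'a"
  assumes q: "card (UNIV::'f set) = q" and qm: "card (UNIV::'a set) = q ^ m" and m: "m \<ge> 1" and j: "j \<ge> 1"
    and hom_add: "\<And>a b. \<phi> (a + b) = \<phi> a + \<phi> b"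
    and hom_mult: "\<And>a b. \<phi> (a * b) = \<phi> a * \<phi> b"
    and hom_one: "\<phi> 1 = 1"
    and sep: "separable_poly G"
    and fact: "G = (\<Prod>i<l. Gs i)"
    and cop: "\<And>i i'. i < l \<Longrightarrow> i' < l \<Longrightarrow> i \<noteq> i' \<Longrightarrow> coprime (Gs i) (Gs i')"
    and dist: "inj_on \<alpha> {..<n}"
    and nz: "\<And>k. k < n \<Longrightarrow> poly G (\<alpha> k) \<noteq> 0"
  shows "int (code_dim (goppa_code \<phi> \<alpha> n (G ^ j)))
           \<ge> int n - (\<Sum>i<l. int n - int (code_dim (goppa_code \<phi> \<alpha> n (Gs i ^ j))))"
proof -
  have phi0: "\<phi> 0 = 0" using hom_add[of 0 0] by (metis add.right_neutral add_left_cancel)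
  define S where "S P c = (\<Sum>k<n. smult (\<phi> (c k)) (lin_inv_mod P (\<alpha> k)))" for P c
  have gc: "goppa_code \<phi> \<alpha> n P = Vsp n \<inter> {c. P dvd S P c}" for P
    by (auto simp: goppa_code_def Vsp_def S_def)
  have sub: "fv.subspace (goppa_code \<phi> \<alpha> n P)" for P
  proof (rule fv.subspaceI)
    show "0 \<in> goppa_code \<phi> \<alpha> n P" by (simp add: goppa_code_def phi0)
  next
    fix x y assume "x \<in> goppa_code \<phi> \<alpha> n P" "y \<in> goppa_code \<phi> \<alpha> n P"
    then show "x + y \<in> goppa_code \<phi> \<alpha> n P"
      by (auto simp: goppa_code_def hom_add smult_add_left sum.distrib intro: dvd_add)
  next
    fix a x assume "x \<in> goppa_code \<phi> \<alpha> n P"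
    then have x: "\<forall>k\<ge>n. x k = 0" "P dvd S P x" by (auto simp: goppa_code_def S_def)
    have "S P (\<lambda>k. a * x k) = smult (\<phi> a) (S P x)"
      unfolding S_def by (simp add: hom_mult smult_sum2)
    then show "(\<lambda>k. a * x k) \<in> goppa_code \<phi> \<alpha> n P"
      using x by (auto simp: goppa_code_def S_def[symmetric] intro: dvd_smult)
  qed
  have subV: "goppa_code \<phi> \<alpha> n P \<subseteq> Vsp n" for P by (auto simp: gc)
  have nzi: "poly (Gs i) (\<alpha> k) \<noteq> 0" if "i < l" "k < n" for i k
    using nz[OF that(2)] that(1) by (auto simp: fact poly_prod)
  have contain: "Vsp n \<inter> {c. \<forall>i<l. c \<in> goppa_code \<phi> \<alpha> n (Gs i ^ j)} \<subseteq> goppa_code \<phi> \<alpha> n (G ^ j)"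
  proof
    fix c assume c: "c \<in> Vsp n \<inter> {c. \<forall>i<l. c \<in> goppa_code \<phi> \<alpha> n (Gs i ^ j)}"
    have each: "Gs i ^ j dvd S (G ^ j) c" if i: "i < l" for i
    proof -
      have d1: "Gs i ^ j dvd S (Gs i ^ j) c" using c i by (auto simp: gc)
      have dv: "Gs i ^ j dvd G ^ j" using i by (auto simp: fact intro: dvd_power_same)
      have "Gs i ^ j dvd S (G ^ j) c - S (Gs i ^ j) c"
        unfolding S_def sum_subtractf[symmetric] smult_diff_right[symmetric]
      proof (rule dvd_sum, rule dvd_smult, rule lin_inv_cong)
        fix k assume "k \<in> {..<n}"
        then show "poly (G ^ j) (\<alpha> k) \<noteq> 0" "poly (Gs i ^ j) (\<alpha> k) \<noteq> 0"
          using nz nzi i by (auto simp: poly_power)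
      qed (rule dv)
      then show ?thesis using d1 by (metis diff_add_cancel dvd_add)
    qed
    have "(\<Prod>i<l. Gs i ^ j) dvd S (G ^ j) c"
    proof (rule prod_bez_dvd)
      show "\<And>i. i < l \<Longrightarrow> Gs i ^ j dvd S (G ^ j) c" by (rule each)
      show "\<And>i i'. i < l \<Longrightarrow> i' < l \<Longrightarrow> i \<noteq> i' \<Longrightarrow> bez (Gs i ^ j) (Gs i' ^ j)"
        by (rule bez_power, rule coprime_imp_bez, rule cop)
    qed
    then have "G ^ j dvd S (G ^ j) c" by (simp add: fact prod_power_distrib)
    then show "c \<in> goppa_code \<phi> \<alpha> n (G ^ j)" using c by (simp add: gc)
  qed
  have "int n - (\<Sum>i<l. int n - int (fv.dim (goppa_code \<phi> \<alpha> n (Gs i ^ j))))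
     \<le> int (fv.dim (Vsp n \<inter> {c. \<forall>i<l. c \<in> goppa_code \<phi> \<alpha> n (Gs i ^ j)}))"
    by (rule codim_induct[OF sub subV])
  also have "\<dots> \<le> int (fv.dim (goppa_code \<phi> \<alpha> n (G ^ j)))"
  proof -
    have "goppa_code \<phi> \<alpha> n (G ^ j) \<subseteq> fv.span (Esp n)" using subV Vsp_span by (rule order_trans)
    from fv.dim_mono_fin[OF Esp_fin this contain] show ?thesis by simp
  qed
  finally show ?thesis by (simp add: code_dim_fv)
qed

end
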